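(* Let $\Gamma$ be a finite set equipped with a product probability measure on $2^\Gamma$. Let $\{B_{ij}\}$ be a finite family of increasing events indexed by pairs $(i,j)$, and set $B_i=\bigcup_j B_{ij}$. Write $(i,j)\sim(k,l)$ if $B_{ij}$ and $B_{kl}$ are not independent; by convention $(i,j)\sim(i,j)$. Let $I_{ij},I_i$ be the indicators of $B_{ij},B_i$. Set \[ X=\sum_i I_i,\qquad \mu=\sum_{i,j}\mathbb E I_{ij}, \] \[ \bar\Theta=\sum_{i,j}\sum_k\Pr\Big(B_{ij}\cap\bigcup_l\{B_{kl}:(k,l)\sim(i,j)\}\Big), \] \[ \bar\Delta=\sum\sum\{\mathbb E I_{ij}I_{kl}:(i,j)\sim(k,l)\}, \] \[ \gamma=\sum_i\sum_{\{j,k\}}\mathbb E I_{ij}I_{ik}, \] where the last inner sum is over unordered pairs $\{j,k\}$ with $j\ne k$. Assume $\mu>0$. Then for every $t\in[\gamma,\mu]$, \[ \Pr(X\le\mu-t)\le\exp\Big[-\frac{(t-\gamma)^2}{2\bar\Theta}\Big]\le\exp\Big[-\frac{(t-\gamma)^2}{2\bar\Delta}\Big]. \]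
   Context: An event $B\subseteq 2^\Gamma$ is increasing if $A\in B$ and $A\subseteq A'$ imply $A'\in B$. *)

theory Defs
  imports Complex_Main
begin

definition wt :: "'a set \<Rightarrow> ('a \<Rightarrow> real) \<Rightarrow> 'a set \<Rightarrow> real" where
  "wt Gamma p S = (\<Prod>x\<in>S. p x) * (\<Prod>x\<in>Gamma - S. 1 - p x)"

definition Pr :: "'a set \<Rightarrow> ('a \<Rightarrow> real) \<Rightarrow> 'a set set \<Rightarrow> real" where
  "Pr Gamma p A = (\<Sum>S\<in>A \<inter> Pow Gamma. wt Gamma p S)"

definition increasing_event :: "'a set \<Rightarrow> 'a set set \<Rightarrow> bool" where
  "increasing_event Gamma B \<longleftrightarrow> B \<subseteq> Pow Gamma \<and>
     (\<forall>A A'. A \<in> B \<longrightarrow> A \<subseteq> A' \<longrightarrow> A' \<subseteq> Gamma \<longrightarrow> A' \<in> B)"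

definition indep_ev :: "'a set \<Rightarrow> ('a \<Rightarrow> real) \<Rightarrow> 'a set set \<Rightarrow> 'a set set \<Rightarrow> bool" where
  "indep_ev Gamma p A B \<longleftrightarrow> Pr Gamma p (A \<inter> B) = Pr Gamma p A * Pr Gamma p B"

definition dep :: "'a set \<Rightarrow> ('a \<Rightarrow> real) \<Rightarrow> ('i \<times> 'j \<Rightarrow> 'a set set) \<Rightarrow> 'i \<times> 'j \<Rightarrow> 'i \<times> 'j \<Rightarrow> bool" where
  "dep Gamma p B a b \<longleftrightarrow> a = b \<or> \<not> indep_ev Gamma p (B a) (B b)"

end

theory Submission imports Defs begin

definition EE :: "'a set \<Rightarrow> ('a \<Rightarrow> real) \<Rightarrow> ('a set \<Rightarrow> real) \<Rightarrow> real" where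
  "EE G p f = (\<Sum>S\<in>Pow G. wt G p S * f S)"

definition ind :: "'a set set \<Rightarrow> 'a set \<Rightarrow> real" where
  "ind A S = (if S \<in> A then 1 else 0)"

definition up :: "'a set \<Rightarrow> 'a set set \<Rightarrow> bool" where
  "up G A \<longleftrightarrow> (\<forall>S T. S \<in> A \<longrightarrow> S \<subseteq> T \<longrightarrow> T \<subseteq> G \<longrightarrow> T \<in> A)"

definition incr :: "'a set \<Rightarrow> ('a set \<Rightarrow> real) \<Rightarrow> bool" where
  "incr G f \<longleftrightarrow> (\<forall>S T. S \<subseteq> T \<longrightarrow> T \<subseteq> G \<longrightarrow> f S \<le> f T)"

lemma wt_insert:
  assumes "finite G" "x \<notin> G" "S \<subseteq> G"
  shows "wt (insert x G) p (insert x S) = p x * wt G p S"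
    and "wt (insert x G) p S = (1 - p x) * wt G p S"
proof -
  have fS: "finite S" using assms finite_subset by blast
  have xS: "x \<notin> S" using assms by blast
  have "insert x G - insert x S = G - S" using assms by blast
  then show "wt (insert x G) p (insert x S) = p x * wt G p S"
    unfolding wt_def using fS xS by simp
  have "insert x G - S = insert x (G - S)" using xS by blast
  then show "wt (insert x G) p S = (1 - p x) * wt G p S"
    unfolding wt_def using assms by simp
qed

lemma EE_insert:
  assumes "finite G" "x \<notin> G"
  shows "EE (insert x G) p f = p x * EE G p (\<lambda>T. f (insert x T)) + (1 - p x) * EE G p f"
proof -
  have fin: "finite (Pow G)" using assms by simp
  have inj: "inj_on (insert x) (Pow G)" using assms unfolding inj_on_def by (metis PowD insert_ident subsetD)
  have disj: "Pow G \<inter> insert x ` Pow G = {}" using assms by blast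
  have "EE (insert x G) p f = (\<Sum>S\<in>Pow G. wt (insert x G) p S * f S) + (\<Sum>S\<in>insert x ` Pow G. wt (insert x G) p S * f S)"
    unfolding EE_def Pow_insert using fin inj disj by (simp add: sum.union_disjoint)
  also have "(\<Sum>S\<in>insert x ` Pow G. wt (insert x G) p S * f S) = (\<Sum>S\<in>Pow G. wt (insert x G) p (insert x S) * f (insert x S))"
    using inj by (simp add: sum.reindex)
  also have "\<dots> = p x * EE G p (\<lambda>T. f (insert x T))"
    unfolding EE_def sum_distrib_left using wt_insert(1)[OF assms] by (auto intro!: sum.cong)
  also have "(\<Sum>S\<in>Pow G. wt (insert x G) p S * f S) = (1 - p x) * EE G p f"
    unfolding EE_def sum_distrib_left using wt_insert(2)[OF assms] by (auto intro!: sum.cong)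
  finally show ?thesis by simp
qed

lemma EE_empty: "EE {} p f = f {}"
  unfolding EE_def wt_def by simp

lemma wt_nonneg: "\<forall>x\<in>G. 0 \<le> p x \<and> p x \<le> 1 \<Longrightarrow> S \<subseteq> G \<Longrightarrow> 0 \<le> wt G p S"
  unfolding wt_def
  by (intro mult_nonneg_nonneg prod_nonneg) (auto dest: subsetD)

definition prb :: "'a set \<Rightarrow> ('a \<Rightarrow> real) \<Rightarrow> bool" where
  "prb G p \<longleftrightarrow> (\<forall>x\<in>G. 0 \<le> p x \<and> p x \<le> 1)"

lemma EE_const: "finite G \<Longrightarrow> EE G p (\<lambda>_. c) = c"
proof (induction G rule: finite_induct)
  case empty thus ?case by (simp add: EE_empty)
next
  case (insert x G) thus ?case by (simp add: EE_insert algebra_simps)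
qed

lemma EE_add: "EE G p (\<lambda>S. f S + g S) = EE G p f + EE G p g"
  unfolding EE_def by (simp add: distrib_left sum.distrib)

lemma EE_diff: "EE G p (\<lambda>S. f S - g S) = EE G p f - EE G p g"
  unfolding EE_def by (simp add: right_diff_distrib sum_subtractf)

lemma EE_cmult: "EE G p (\<lambda>S. c * f S) = c * EE G p f"
  unfolding EE_def sum_distrib_left by (simp add: mult.left_commute)

lemma EE_multc: "EE G p (\<lambda>S. f S * c) = EE G p f * c"
  unfolding EE_def sum_distrib_right by (simp add: mult.assoc)

lemma EE_sum: "EE G p (\<lambda>S. \<Sum>i\<in>I. f i S) = (\<Sum>i\<in>I. EE G p (f i))"
  unfolding EE_def by (simp add: sum_distrib_left sum.swap[of _ I])

lemma EE_cong: "(\<And>S. S \<subseteq> G \<Longrightarrow> f S = g S) \<Longrightarrow> EE G p f = EE G p g"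
  unfolding EE_def by (auto intro!: sum.cong)

lemma EE_mono: "prb G p \<Longrightarrow> (\<And>S. S \<subseteq> G \<Longrightarrow> f S \<le> g S) \<Longrightarrow> EE G p f \<le> EE G p g"
  unfolding EE_def prb_def by (auto intro!: sum_mono mult_left_mono wt_nonneg)

lemma EE_nonneg: "prb G p \<Longrightarrow> (\<And>S. S \<subseteq> G \<Longrightarrow> 0 \<le> f S) \<Longrightarrow> 0 \<le> EE G p f"
  unfolding EE_def prb_def by (auto intro!: sum_nonneg mult_nonneg_nonneg wt_nonneg)

lemma prb_insert: "prb (insert x G) p \<Longrightarrow> prb G p \<and> 0 \<le> p x \<and> p x \<le> 1"
  unfolding prb_def by auto

lemma incr_sect:
  assumes "incr (insert x G) f"
  shows "incr G (\<lambda>T. f (insert x T))" "incr G f" "\<And>S. S \<subseteq> G \<Longrightarrow> f S \<le> f (insert x S)"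
  using assms unfolding incr_def
  by (meson insert_mono, meson subset_insertI2, meson insert_mono subset_insertI)

lemma harris:
  assumes "finite G" "prb G p" "incr G f" "incr G (\<lambda>S. - g S)"
  shows "EE G p (\<lambda>S. f S * g S) \<le> EE G p f * EE G p g"
  using assms
proof (induction G arbitrary: f g rule: finite_induct)
  case empty thus ?case by (simp add: EE_empty)
next
  case (insert x G)
  define q where "q = p x"
  have pr: "prb G p" and q: "0 \<le> q" "q \<le> 1" using prb_insert[OF insert.prems(1)] q_def by auto
  note fs = incr_sect[OF insert.prems(2)]
  note gs = incr_sect[OF insert.prems(3)]
  define a1 where "a1 = EE G p (\<lambda>T. f (insert x T))"
  define a0 where "a0 = EE G p f"
  define b1 where "b1 = EE G p (\<lambda>T. g (insert x T))"
  define b0 where "b0 = EE G p g"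
  have h1: "EE G p (\<lambda>T. f (insert x T) * g (insert x T)) \<le> a1 * b1"
    using insert.IH[OF pr fs(1) gs(1)] unfolding a1_def b1_def by simp
  have h0: "EE G p (\<lambda>T. f T * g T) \<le> a0 * b0"
    using insert.IH[OF pr fs(2) gs(2)] unfolding a0_def b0_def by simp
  have ha: "a0 \<le> a1" unfolding a0_def a1_def by (rule EE_mono[OF pr]) (use fs(3) in auto)
  have hb: "b1 \<le> b0" unfolding b0_def b1_def by (rule EE_mono[OF pr]) (use gs(3) in auto)
  have "EE (insert x G) p (\<lambda>S. f S * g S) = q * EE G p (\<lambda>T. f (insert x T) * g (insert x T)) + (1 - q) * EE G p (\<lambda>T. f T * g T)"
    using EE_insert[OF insert.hyps] q_def by simp
  also have "\<dots> \<le> q * (a1 * b1) + (1 - q) * (a0 * b0)"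
    using h1 h0 q by (intro add_mono mult_left_mono) auto
  also have "\<dots> \<le> (q * a1 + (1 - q) * a0) * (q * b1 + (1 - q) * b0)"
  proof -
    have "q * (1 - q) * ((a1 - a0) * (b1 - b0)) \<le> 0"
      using q ha hb by (intro mult_nonneg_nonpos) (auto intro: mult_nonneg_nonpos)
    thus ?thesis by (simp add: algebra_simps)
  qed
  also have "\<dots> = EE (insert x G) p f * EE (insert x G) p g"
    using EE_insert[OF insert.hyps] q_def a1_def a0_def b1_def b0_def by simp
  finally show ?case .
qed

lemma Pr_EE: "finite G \<Longrightarrow> Pr G p A = EE G p (ind A)"
proof -
  assume f: "finite G"
  have "sum (wt G p) (Pow G \<inter> A) = (\<Sum>S\<in>Pow G. if S \<in> A then wt G p S else 0)"
    by (rule sum.inter_restrict) (simp add: f)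
  thus ?thesis unfolding Pr_def EE_def ind_def by (simp add: Int_commute if_distrib cong: if_cong)
qed

lemma up_incr: "up G A \<Longrightarrow> incr G (ind A)"
  unfolding up_def incr_def ind_def by auto

lemma up_sect:
  assumes "up (insert x G) A"
  shows "up G {T. insert x T \<in> A}" "up G A" "\<And>S. S \<subseteq> G \<Longrightarrow> S \<in> A \<Longrightarrow> insert x S \<in> A"
  using assms unfolding up_def
  by (simp, meson insert_mono, meson subset_insertI2, meson insert_mono subset_insertI)

lemma harris_up:
  assumes "finite G" "prb G p" "up G A" "up G B"
  shows "EE G p (ind A) * EE G p (ind B) \<le> EE G p (\<lambda>S. ind A S * ind B S)"
proof -
  have "EE G p (\<lambda>S. ind A S * (- ind B S)) \<le> EE G p (ind A) * EE G p (\<lambda>S. - ind B S)"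
    using harris[OF assms(1,2) up_incr[OF assms(3)], of "\<lambda>S. - ind B S"] up_incr[OF assms(4)] by simp
  moreover have "EE G p (\<lambda>S. - ind B S) = - EE G p (ind B)"
    using EE_cmult[of G p "-1" "ind B"] by simp
  moreover have "EE G p (\<lambda>S. ind A S * (- ind B S)) = - EE G p (\<lambda>S. ind A S * ind B S)"
    using EE_cmult[of G p "-1" "\<lambda>S. ind A S * ind B S"] by simp
  ultimately show ?thesis by simp
qed

lemma null_diff:
  assumes "finite G" "prb G p" "\<And>T. T \<subseteq> G \<Longrightarrow> T \<in> B0 \<Longrightarrow> T \<in> B1"
    "EE G p (ind B1) = EE G p (ind B0)" "T \<subseteq> G" "wt G p T \<noteq> 0"
  shows "T \<in> B1 \<longleftrightarrow> T \<in> B0"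
proof -
  have "EE G p (\<lambda>S. ind B1 S - ind B0 S) = 0" using assms(4) by (simp add: EE_diff)
  hence "(\<Sum>S\<in>Pow G. wt G p S * (ind B1 S - ind B0 S)) = 0" unfolding EE_def .
  moreover have "\<forall>S\<in>Pow G. 0 \<le> wt G p S * (ind B1 S - ind B0 S)"
    using assms(2,3) unfolding prb_def ind_def by (auto intro!: wt_nonneg)
  ultimately have "\<forall>S\<in>Pow G. wt G p S * (ind B1 S - ind B0 S) = 0"
    using assms(1) sum_nonneg_eq_0_iff[of "Pow G" "\<lambda>S. wt G p S * (ind B1 S - ind B0 S)"] by auto
  hence "wt G p T * (ind B1 T - ind B0 T) = 0" using assms(5) by auto
  thus ?thesis using assms(3,5,6) unfolding ind_def by (auto split: if_splits)
qed

lemma three_zero: "(u::real) \<ge> 0 \<Longrightarrow> v \<ge> 0 \<Longrightarrow> w \<ge> 0 \<Longrightarrow> u + v + w = 0 \<Longrightarrow> u = 0 \<and> v = 0 \<and> w = 0"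
  by linarith

lemma indep_fun:
  assumes "finite G" "prb G p" "up G A" "\<forall>b. up G (F b)"
    "\<forall>b. EE G p (\<lambda>S. ind A S * ind (F b) S) = EE G p (ind A) * EE G p (ind (F b))"
  shows "EE G p (\<lambda>S. ind A S * h (\<lambda>b. S \<in> F b)) = EE G p (ind A) * EE G p (\<lambda>S. h (\<lambda>b. S \<in> F b))"
  using assms
proof (induction G arbitrary: A F rule: finite_induct)
  case empty thus ?case by (simp add: EE_empty)
next
  case (insert x G)
  define q where "q = p x"
  have pr: "prb G p" and q: "0 \<le> q" "q \<le> 1" using prb_insert[OF insert.prems(1)] q_def by auto
  define A1 where "A1 = {T. insert x T \<in> A}"
  define F1 where "F1 = (\<lambda>b. {T. insert x T \<in> F b})"
  have uA1: "up G A1" and uA: "up G A" using up_sect[OF insert.prems(2)] A1_def by auto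
  have uF1: "\<forall>b. up G (F1 b)" unfolding F1_def using insert.prems(3) by (blast intro: up_sect(1))
  have uF: "\<forall>b. up G (F b)" using insert.prems(3) by (blast intro: up_sect(2))
  define a1 where "a1 = EE G p (ind A1)"
  define a0 where "a0 = EE G p (ind A)"
  have ha: "a0 \<le> a1" unfolding a0_def a1_def
    by (rule EE_mono[OF pr]) (use up_sect(3)[OF insert.prems(2)] in \<open>auto simp: ind_def A1_def\<close>)
  have key: "\<forall>b. (q = 0 \<or> EE G p (\<lambda>S. ind A1 S * ind (F1 b) S) = a1 * EE G p (ind (F1 b)))
            \<and> (q = 1 \<or> EE G p (\<lambda>S. ind A S * ind (F b) S) = a0 * EE G p (ind (F b)))
            \<and> (q = 0 \<or> q = 1 \<or> (a1 - a0) * (EE G p (ind (F1 b)) - EE G p (ind (F b))) = 0)"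
  proof
    fix b
    define c1 where "c1 = EE G p (ind (F1 b))"
    define c0 where "c0 = EE G p (ind (F b))"
    define X1 where "X1 = EE G p (\<lambda>S. ind A1 S * ind (F1 b) S)"
    define X0 where "X0 = EE G p (\<lambda>S. ind A S * ind (F b) S)"
    have hc: "c0 \<le> c1" unfolding c0_def c1_def
      by (rule EE_mono[OF pr]) (use up_sect(3)[OF insert.prems(3)[rule_format, of b]] in \<open>auto simp: ind_def F1_def\<close>)
    have h1: "a1 * c1 \<le> X1" unfolding a1_def c1_def X1_def using harris_up[OF insert.hyps(1) pr uA1] uF1 by auto
    have h0: "a0 * c0 \<le> X0" unfolding a0_def c0_def X0_def using harris_up[OF insert.hyps(1) pr uA] uF by auto
    have e1: "EE (insert x G) p (\<lambda>S. ind A S * ind (F b) S) = q * X1 + (1 - q) * X0"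
      unfolding X1_def X0_def q_def EE_insert[OF insert.hyps] by (simp add: A1_def F1_def ind_def)
    have e2: "EE (insert x G) p (ind A) = q * a1 + (1 - q) * a0"
      unfolding a1_def a0_def q_def EE_insert[OF insert.hyps] by (simp add: A1_def ind_def[abs_def])
    have e3: "EE (insert x G) p (ind (F b)) = q * c1 + (1 - q) * c0"
      unfolding c1_def c0_def q_def EE_insert[OF insert.hyps] by (simp add: F1_def ind_def[abs_def])
    have eq: "q * X1 + (1 - q) * X0 = (q * a1 + (1 - q) * a0) * (q * c1 + (1 - q) * c0)"
      using insert.prems(4) e1 e2 e3 by metis
    have "q * (X1 - a1 * c1) + (1 - q) * (X0 - a0 * c0) + q * (1 - q) * ((a1 - a0) * (c1 - c0)) = 0"
      using eq by (simp add: algebra_simps)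
    moreover have "q * (X1 - a1 * c1) \<ge> 0" using q h1 by simp
    moreover have "(1 - q) * (X0 - a0 * c0) \<ge> 0" using q h0 by simp
    moreover have "q * (1 - q) * ((a1 - a0) * (c1 - c0)) \<ge> 0" using q ha hc by simp
    ultimately have z: "q * (X1 - a1 * c1) = 0" "(1 - q) * (X0 - a0 * c0) = 0"
        "q * (1 - q) * ((a1 - a0) * (c1 - c0)) = 0"
      using three_zero by blast+
    show "(q = 0 \<or> X1 = a1 * c1) \<and> (q = 1 \<or> X0 = a0 * c0) \<and> (q = 0 \<or> q = 1 \<or> (a1 - a0) * (c1 - c0) = 0)"
      using z by auto
  qed
  define g1 where "g1 = EE G p (\<lambda>S. h (\<lambda>b. S \<in> F1 b))"
  define g0 where "g0 = EE G p (\<lambda>S. h (\<lambda>b. S \<in> F b))"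
  have i1: "q = 0 \<or> EE G p (\<lambda>S. ind A1 S * h (\<lambda>b. S \<in> F1 b)) = a1 * g1"
    using insert.IH[OF pr uA1 uF1] key unfolding a1_def g1_def by blast
  have i0: "q = 1 \<or> EE G p (\<lambda>S. ind A S * h (\<lambda>b. S \<in> F b)) = a0 * g0"
    using insert.IH[OF pr uA uF] key unfolding a0_def g0_def by blast
  have i2: "q = 0 \<or> q = 1 \<or> a1 = a0 \<or> g1 = g0"
  proof (rule ccontr)
    assume nc: "\<not> (q = 0 \<or> q = 1 \<or> a1 = a0 \<or> g1 = g0)"
    hence cb: "\<forall>b. EE G p (ind (F1 b)) = EE G p (ind (F b))" using key by auto
    have "g1 = g0" unfolding g1_def g0_def EE_def
    proof (rule sum.cong[OF refl])
      fix T assume T: "T \<in> Pow G"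
      show "wt G p T * h (\<lambda>b. T \<in> F1 b) = wt G p T * h (\<lambda>b. T \<in> F b)"
      proof (cases "wt G p T = 0")
        case False
        have "\<forall>b. T \<in> F1 b \<longleftrightarrow> T \<in> F b"
        proof
          fix b show "T \<in> F1 b \<longleftrightarrow> T \<in> F b"
            by (rule null_diff[OF insert.hyps(1) pr _ cb[rule_format, of b] _ False])
               (use up_sect(3)[OF insert.prems(3)[rule_format, of b]] T in \<open>auto simp: F1_def\<close>)
        qed
        thus ?thesis by simp
      qed simp
    qed
    thus False using nc by simp
  qed
  have lhs: "EE (insert x G) p (\<lambda>S. ind A S * h (\<lambda>b. S \<in> F b)) =
      q * EE G p (\<lambda>S. ind A1 S * h (\<lambda>b. S \<in> F1 b)) + (1 - q) * EE G p (\<lambda>S. ind A S * h (\<lambda>b. S \<in> F b))"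
    unfolding q_def EE_insert[OF insert.hyps] by (simp add: A1_def F1_def ind_def)
  have r1: "EE (insert x G) p (ind A) = q * a1 + (1 - q) * a0"
    unfolding a1_def a0_def q_def EE_insert[OF insert.hyps] by (simp add: A1_def ind_def[abs_def])
  have r2: "EE (insert x G) p (\<lambda>S. h (\<lambda>b. S \<in> F b)) = q * g1 + (1 - q) * g0"
    unfolding g1_def g0_def q_def EE_insert[OF insert.hyps] by (simp add: F1_def)
  show ?case unfolding lhs r1 r2
    using i1 i0 i2 by (auto simp: algebra_simps)
qed

lemma up_Union: "(\<And>x. x \<in> K \<Longrightarrow> up G (F x)) \<Longrightarrow> up G (\<Union>x\<in>K. F x)"
  unfolding up_def by (simp, meson)

lemma up_Inter: "(\<And>x. x \<in> K \<Longrightarrow> up G (F x)) \<Longrightarrow> up G (\<Inter>x\<in>K. F x)"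
  unfolding up_def by (simp, meson)

lemma up_empty: "up G {}" unfolding up_def by simp

lemma incr_sum: "(\<And>i. i \<in> K \<Longrightarrow> incr G (f i)) \<Longrightarrow> incr G (\<lambda>S. \<Sum>i\<in>K. f i S)"
  unfolding incr_def by (auto intro!: sum_mono)

lemma incr_mult: "incr G f \<Longrightarrow> incr G g \<Longrightarrow> (\<And>S. 0 \<le> f S) \<Longrightarrow> (\<And>S. 0 \<le> g S) \<Longrightarrow> incr G (\<lambda>S. f S * g S)"
  unfolding incr_def by (meson mult_mono)

lemma incr_exp: "incr G f \<Longrightarrow> 0 \<le> l \<Longrightarrow> incr G (\<lambda>S. - exp (- l * f S))"
  unfolding incr_def by (simp add: mult_left_mono)

lemma ind_nonneg: "0 \<le> ind A S" unfolding ind_def by simp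

lemma ind_Int: "ind A S * ind B S = ind (A \<inter> B) S" unfolding ind_def by simp

lemma up_of_inc: "increasing_event G A \<Longrightarrow> up G A"
  unfolding increasing_event_def up_def by blast

lemma dep_sym: "dep G p B a b \<longleftrightarrow> dep G p B b a"
  unfolding dep_def indep_ev_def by (auto simp: Int_commute mult.commute)

lemma Pr_mono: "finite G \<Longrightarrow> prb G p \<Longrightarrow> A \<subseteq> A' \<Longrightarrow> Pr G p A \<le> Pr G p A'"
  by (simp add: Pr_EE) (rule EE_mono, auto simp: ind_def)

lemma Pr_nonneg: "finite G \<Longrightarrow> prb G p \<Longrightarrow> 0 \<le> Pr G p A"
  by (simp add: Pr_EE) (rule EE_nonneg, auto simp: ind_def)

lemma nat_choose2: "m \<ge> 1 \<Longrightarrow> m - 1 \<le> (m choose 2)"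
proof (cases m)
  case (Suc k)
  have "Suc k choose 2 = k + (k choose 2)" by (simp add: numeral_2_eq_2)
  thus ?thesis using Suc by simp
qed simp

locale jset =
  fixes Gamma :: "'a set" and p :: "'a \<Rightarrow> real" and Idx :: "('i \<times> 'j) set" and B :: "'i \<times> 'j \<Rightarrow> 'a set set"
  assumes fin: "finite Gamma" and prb: "prb Gamma p" and finI: "finite Idx"
    and upB: "\<And>a. a \<in> Idx \<Longrightarrow> up Gamma (B a)"
begin

definition "Ii = fst ` Idx"
definition "J i = {j. (i, j) \<in> Idx}"
definition "Bi i = (\<Union>j\<in>J i. B (i, j))"
definition "X S = (\<Sum>i\<in>Ii. ind (Bi i) S)"
definition "Psi l = EE Gamma p (\<lambda>S. exp (- l * X S))"
definition "U a k = (\<Union>l\<in>{l. (k, l) \<in> Idx \<and> dep Gamma p B (k, l) a}. B (k, l))"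
definition "V a k = (\<Union>l\<in>{l. (k, l) \<in> Idx \<and> \<not> dep Gamma p B (k, l) a}. B (k, l))"
definition "theta a = (\<Sum>k\<in>Ii. Pr Gamma p (B a \<inter> U a k))"
definition "Qs i = {Q. Q \<subseteq> J i \<and> card Q = 2}"

lemma finIi: "finite Ii" unfolding Ii_def using finI by simp

lemma finJ: "finite (J i)"
proof -
  have "J i \<subseteq> snd ` Idx" unfolding J_def by force
  thus ?thesis using finI finite_subset by blast
qed

lemma finQs: "finite (Qs i)" unfolding Qs_def using finJ by simp

lemma sigma_sum: "(\<Sum>i\<in>Ii. \<Sum>j\<in>J i. f (i, j)) = (\<Sum>a\<in>Idx. f a)"
proof -
  have "(\<Sum>i\<in>Ii. \<Sum>j\<in>J i. f (i, j)) = sum (\<lambda>(i, j). f (i, j)) (SIGMA i:Ii. J i)"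
    using sum.Sigma[OF finIi, of J "\<lambda>i j. f (i, j)"] finJ by (simp add: case_prod_beta')
  moreover have "(SIGMA i:Ii. J i) = Idx" unfolding Ii_def J_def by force
  ultimately show ?thesis by simp
qed

lemma up_Bi: "up Gamma (Bi i)" unfolding Bi_def by (rule up_Union) (auto simp: J_def intro: upB)
lemma up_U: "up Gamma (U a k)" unfolding U_def by (rule up_Union) (auto intro: upB)
lemma up_V: "up Gamma (V a k)" unfolding V_def by (rule up_Union) (auto intro: upB)

lemma X_nonneg: "0 \<le> X S" unfolding X_def by (auto intro!: sum_nonneg simp: ind_def)

lemma incr_X: "incr Gamma X" unfolding X_def by (rule incr_sum) (rule up_incr[OF up_Bi])

lemma X_card: "X S = real (card {i\<in>Ii. S \<in> Bi i})"
  unfolding X_def ind_def using finIi by (simp add: sum.inter_filter[symmetric])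

lemma Psi_nonneg: "0 \<le> Psi l" unfolding Psi_def by (rule EE_nonneg[OF prb]) simp

end


context jset begin

lemma bonf: "(\<Sum>j\<in>J i. ind (B (i, j)) S) - (\<Sum>Q\<in>Qs i. ind (\<Inter>j\<in>Q. B (i, j)) S) \<le> ind (Bi i) S"
proof -
  define M where "M = {j\<in>J i. S \<in> B (i, j)}"
  have fM: "finite M" unfolding M_def using finJ by simp
  have h1: "(\<Sum>j\<in>J i. ind (B (i, j)) S) = real (card M)"
    unfolding ind_def M_def using finJ by (simp add: sum.inter_filter[symmetric])
  have "{Q\<in>Qs i. S \<in> (\<Inter>j\<in>Q. B (i, j))} = {Q. Q \<subseteq> M \<and> card Q = 2}"
    unfolding Qs_def M_def by auto
  hence h2: "(\<Sum>Q\<in>Qs i. ind (\<Inter>j\<in>Q. B (i, j)) S) = real (card M choose 2)"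
    unfolding ind_def using finQs n_subsets[OF fM, of 2] by (simp add: sum.inter_filter[symmetric])
  have h3: "ind (Bi i) S = (if M = {} then 0 else 1)"
    unfolding ind_def Bi_def M_def by auto
  show ?thesis
  proof (cases "M = {}")
    case True thus ?thesis using h1 h2 h3 by simp
  next
    case False
    hence "card M \<ge> 1" using fM by (simp add: Suc_leI card_gt_0_iff)
    hence "card M - 1 \<le> (card M choose 2)" by (rule nat_choose2)
    hence "real (card M) \<le> 1 + real (card M choose 2)" using \<open>card M \<ge> 1\<close> by linarith
    thus ?thesis using h1 h2 h3 False by simp
  qed
qed


lemma ind_empty: "ind {} = (\<lambda>S. 0)" unfolding ind_def by auto

lemma per_a:
  assumes a: "a \<in> Idx" and l: "0 \<le> l"
  shows "Psi l * (Pr Gamma p (B a) - l * theta a) \<le> EE Gamma p (\<lambda>S. ind (B a) S * exp (- l * X S))"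
proof -
  define Y where "Y S = (\<Sum>k\<in>Ii. ind (U a k) S)" for S
  define Z where "Z S = (\<Sum>k\<in>Ii. ind (V a k) S)" for S
  have XYZ: "X S \<le> Y S + Z S" for S
  proof -
    have "ind (Bi k) S \<le> ind (U a k) S + ind (V a k) S" for k
    proof -
      have "Bi k \<subseteq> U a k \<union> V a k" unfolding Bi_def J_def U_def V_def by blast
      thus ?thesis unfolding ind_def by auto
    qed
    thus ?thesis unfolding X_def Y_def Z_def by (simp add: sum.distrib[symmetric] sum_mono)
  qed
  have ZX: "Z S \<le> X S" for S
  proof -
    have "ind (V a k) S \<le> ind (Bi k) S" for k
    proof -
      have "V a k \<subseteq> Bi k" unfolding Bi_def J_def V_def by blast
      thus ?thesis unfolding ind_def by auto
    qed
    thus ?thesis unfolding X_def Z_def by (simp add: sum_mono)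
  qed
  have Ynn: "0 \<le> Y S" for S unfolding Y_def by (auto intro!: sum_nonneg simp: ind_def)
  have pw: "ind (B a) S * exp (- l * Z S) - l * (ind (B a) S * Y S * exp (- l * Z S))
        \<le> ind (B a) S * exp (- l * X S)" for S
  proof -
    have "exp (- l * Y S - l * Z S) \<le> exp (- l * X S)"
      using mult_left_mono[OF XYZ[of S] l] by (simp add: distrib_left)
    moreover have "(1 - l * Y S) * exp (- l * Z S) \<le> exp (- l * Y S - l * Z S)"
    proof -
      have "(1 - l * Y S) * exp (- l * Z S) \<le> exp (- l * Y S) * exp (- l * Z S)"
        using exp_ge_add_one_self[of "- l * Y S"] by (intro mult_right_mono) auto
      also have "\<dots> = exp (- l * Y S - l * Z S)" by (simp add: exp_add[symmetric])
      finally show ?thesis .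
    qed
    ultimately have "(1 - l * Y S) * exp (- l * Z S) \<le> exp (- l * X S)" by linarith
    hence "ind (B a) S * ((1 - l * Y S) * exp (- l * Z S)) \<le> ind (B a) S * exp (- l * X S)"
      by (rule mult_left_mono) (simp add: ind_def)
    thus ?thesis by (simp add: algebra_simps)
  qed
  define Ez where "Ez = EE Gamma p (\<lambda>S. exp (- l * Z S))"
  have E1: "EE Gamma p (\<lambda>S. ind (B a) S * exp (- l * Z S)) - l * EE Gamma p (\<lambda>S. ind (B a) S * Y S * exp (- l * Z S))
      \<le> EE Gamma p (\<lambda>S. ind (B a) S * exp (- l * X S))"
  proof -
    have "EE Gamma p (\<lambda>S. ind (B a) S * exp (- l * Z S) - l * (ind (B a) S * Y S * exp (- l * Z S)))
       \<le> EE Gamma p (\<lambda>S. ind (B a) S * exp (- l * X S))"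
      by (rule EE_mono[OF prb]) (rule pw)
    thus ?thesis by (simp add: EE_diff EE_cmult)
  qed
  define F where "F b = (if b \<in> Idx \<and> \<not> dep Gamma p B b a then B b else {})" for b
  define h where "h M = exp (- l * (\<Sum>k\<in>Ii. if \<exists>l'\<in>J k. M (k, l') then 1 else 0))" for M :: "'i \<times> 'j \<Rightarrow> bool"
  have hZ: "h (\<lambda>b. S \<in> F b) = exp (- l * Z S)" for S
  proof -
    have "ind (V a k) S = (if \<exists>l'\<in>J k. S \<in> F (k, l') then 1 else 0)" for k
      unfolding ind_def V_def F_def J_def by auto
    thus ?thesis unfolding h_def Z_def by simp
  qed
  have indep: "EE Gamma p (\<lambda>S. ind (B a) S * ind (F b) S) = EE Gamma p (ind (B a)) * EE Gamma p (ind (F b))" for b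
  proof (cases "b \<in> Idx \<and> \<not> dep Gamma p B b a")
    case True
    hence "Pr Gamma p (B b \<inter> B a) = Pr Gamma p (B b) * Pr Gamma p (B a)"
      unfolding dep_def indep_ev_def by auto
    thus ?thesis using True unfolding F_def by (simp add: ind_Int Pr_EE[OF fin] Int_commute mult.commute)
  next
    case False
    hence "F b = {}" unfolding F_def by auto
    thus ?thesis by (simp add: ind_empty EE_const[OF fin])
  qed
  have upF: "\<forall>b. up Gamma (F b)" unfolding F_def using upB up_empty by auto
  have I1: "EE Gamma p (\<lambda>S. ind (B a) S * exp (- l * Z S)) = Pr Gamma p (B a) * Ez"
    using indep_fun[OF fin prb upB[OF a] upF, of h] indep hZ unfolding Ez_def
    by (simp add: Pr_EE[OF fin])
  have incrY: "incr Gamma Y" unfolding Y_def by (rule incr_sum) (rule up_incr[OF up_U])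
  have incrZ: "incr Gamma Z" unfolding Z_def by (rule incr_sum) (rule up_incr[OF up_V])
  have H: "EE Gamma p (\<lambda>S. (ind (B a) S * Y S) * exp (- l * Z S)) \<le> EE Gamma p (\<lambda>S. ind (B a) S * Y S) * Ez"
    unfolding Ez_def
    by (rule harris[OF fin prb incr_mult[OF up_incr[OF upB[OF a]] incrY ind_nonneg Ynn] incr_exp[OF incrZ l]])
  have th: "EE Gamma p (\<lambda>S. ind (B a) S * Y S) = theta a"
    unfolding Y_def theta_def sum_distrib_left EE_sum by (simp add: ind_Int Pr_EE[OF fin])
  have E2: "Ez * (Pr Gamma p (B a) - l * theta a) \<le> EE Gamma p (\<lambda>S. ind (B a) S * exp (- l * X S))"
  proof -
    have "l * EE Gamma p (\<lambda>S. ind (B a) S * Y S * exp (- l * Z S)) \<le> l * (theta a * Ez)"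
      using H th l by (simp add: mult_left_mono)
    thus ?thesis using E1 I1 by (simp add: algebra_simps)
  qed
  have PE: "Psi l \<le> Ez" unfolding Psi_def Ez_def
    by (rule EE_mono[OF prb]) (use ZX l in \<open>simp add: mult_left_mono\<close>)
  have nn: "0 \<le> EE Gamma p (\<lambda>S. ind (B a) S * exp (- l * X S))"
    by (rule EE_nonneg[OF prb]) (simp add: ind_def)
  show ?thesis
  proof (cases "0 \<le> Pr Gamma p (B a) - l * theta a")
    case True
    hence "Psi l * (Pr Gamma p (B a) - l * theta a) \<le> Ez * (Pr Gamma p (B a) - l * theta a)"
      using PE by (rule mult_right_mono[rotated])
    thus ?thesis using E2 by linarith
  next
    case False
    hence "Psi l * (Pr Gamma p (B a) - l * theta a) \<le> 0"
      using Psi_nonneg by (simp add: mult_nonneg_nonpos)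
    thus ?thesis using nn by linarith
  qed
qed


definition "mu = (\<Sum>a\<in>Idx. Pr Gamma p (B a))"
definition "Theta = (\<Sum>a\<in>Idx. theta a)"
definition "gam = (\<Sum>i\<in>Ii. \<Sum>Q\<in>Qs i. Pr Gamma p (\<Inter>j\<in>Q. B (i, j)))"

lemma per_i:
  assumes l: "0 \<le> l"
  shows "(\<Sum>j\<in>J i. Psi l * (Pr Gamma p (B (i, j)) - l * theta (i, j)))
          - (\<Sum>Q\<in>Qs i. Pr Gamma p (\<Inter>j\<in>Q. B (i, j)) * Psi l)
       \<le> EE Gamma p (\<lambda>S. ind (Bi i) S * exp (- l * X S))"
proof -
  define e where "e S = exp (- l * X S)" for S
  have "EE Gamma p (\<lambda>S. ((\<Sum>j\<in>J i. ind (B (i, j)) S) - (\<Sum>Q\<in>Qs i. ind (\<Inter>j\<in>Q. B (i, j)) S)) * e S)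
     \<le> EE Gamma p (\<lambda>S. ind (Bi i) S * e S)"
    by (rule EE_mono[OF prb]) (rule mult_right_mono[OF bonf], simp add: e_def)
  moreover have "EE Gamma p (\<lambda>S. ((\<Sum>j\<in>J i. ind (B (i, j)) S) - (\<Sum>Q\<in>Qs i. ind (\<Inter>j\<in>Q. B (i, j)) S)) * e S)
     = (\<Sum>j\<in>J i. EE Gamma p (\<lambda>S. ind (B (i, j)) S * e S)) - (\<Sum>Q\<in>Qs i. EE Gamma p (\<lambda>S. ind (\<Inter>j\<in>Q. B (i, j)) S * e S))"
    by (simp add: left_diff_distrib sum_distrib_right EE_diff EE_sum)
  moreover have "(\<Sum>j\<in>J i. Psi l * (Pr Gamma p (B (i, j)) - l * theta (i, j))) \<le> (\<Sum>j\<in>J i. EE Gamma p (\<lambda>S. ind (B (i, j)) S * e S))"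
    by (rule sum_mono) (use per_a l in \<open>auto simp: J_def e_def\<close>)
  moreover have "(\<Sum>Q\<in>Qs i. EE Gamma p (\<lambda>S. ind (\<Inter>j\<in>Q. B (i, j)) S * e S)) \<le> (\<Sum>Q\<in>Qs i. Pr Gamma p (\<Inter>j\<in>Q. B (i, j)) * Psi l)"
  proof (rule sum_mono)
    fix Q assume Q: "Q \<in> Qs i"
    have uQ: "up Gamma (\<Inter>j\<in>Q. B (i, j))"
      by (rule up_Inter) (use Q upB in \<open>auto simp: Qs_def J_def\<close>)
    show "EE Gamma p (\<lambda>S. ind (\<Inter>j\<in>Q. B (i, j)) S * e S) \<le> Pr Gamma p (\<Inter>j\<in>Q. B (i, j)) * Psi l"
      using harris[OF fin prb up_incr[OF uQ] incr_exp[OF incr_X l]]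
      unfolding e_def Psi_def Pr_EE[OF fin] by simp
  qed
  ultimately show ?thesis unfolding e_def by linarith
qed

lemma key:
  assumes l: "0 \<le> l"
  shows "Psi l * (mu - gam - l * Theta) \<le> EE Gamma p (\<lambda>S. X S * exp (- l * X S))"
proof -
  have "EE Gamma p (\<lambda>S. X S * exp (- l * X S)) = (\<Sum>i\<in>Ii. EE Gamma p (\<lambda>S. ind (Bi i) S * exp (- l * X S)))"
    unfolding X_def sum_distrib_right EE_sum ..
  moreover have "(\<Sum>i\<in>Ii. (\<Sum>j\<in>J i. Psi l * (Pr Gamma p (B (i, j)) - l * theta (i, j)))
          - (\<Sum>Q\<in>Qs i. Pr Gamma p (\<Inter>j\<in>Q. B (i, j)) * Psi l))
       \<le> (\<Sum>i\<in>Ii. EE Gamma p (\<lambda>S. ind (Bi i) S * exp (- l * X S)))"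
    by (rule sum_mono) (rule per_i[OF l])
  moreover have "(\<Sum>i\<in>Ii. (\<Sum>j\<in>J i. Psi l * (Pr Gamma p (B (i, j)) - l * theta (i, j)))
          - (\<Sum>Q\<in>Qs i. Pr Gamma p (\<Inter>j\<in>Q. B (i, j)) * Psi l)) = Psi l * (mu - gam - l * Theta)"
  proof -
    have "(\<Sum>i\<in>Ii. \<Sum>j\<in>J i. Psi l * (Pr Gamma p (B (i, j)) - l * theta (i, j)))
        = (\<Sum>a\<in>Idx. Psi l * (Pr Gamma p (B a) - l * theta a))"
      by (rule sigma_sum)
    also have "\<dots> = Psi l * (mu - l * Theta)"
      unfolding mu_def Theta_def by (simp add: sum_distrib_left sum_subtractf right_diff_distrib)
    finally have 1: "(\<Sum>i\<in>Ii. \<Sum>j\<in>J i. Psi l * (Pr Gamma p (B (i, j)) - l * theta (i, j))) = Psi l * (mu - l * Theta)" .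
    have 2: "(\<Sum>i\<in>Ii. \<Sum>Q\<in>Qs i. Pr Gamma p (\<Inter>j\<in>Q. B (i, j)) * Psi l) = gam * Psi l"
      unfolding gam_def by (simp add: sum_distrib_right)
    show ?thesis unfolding sum_subtractf 1 2 by (simp add: algebra_simps)
  qed
  ultimately show ?thesis by linarith
qed


lemma dPsi: "(Psi has_real_derivative - EE Gamma p (\<lambda>S. X S * exp (- x * X S))) (at x)"
proof -
  have "((\<lambda>x. \<Sum>S\<in>Pow Gamma. wt Gamma p S * exp (- x * X S)) has_real_derivative
        (\<Sum>S\<in>Pow Gamma. wt Gamma p S * (exp (- x * X S) * (- X S)))) (at x)"
    by (intro DERIV_sum DERIV_cmult) (auto intro!: derivative_eq_intros)
  moreover have "(\<Sum>S\<in>Pow Gamma. wt Gamma p S * (exp (- x * X S) * (- X S))) = - EE Gamma p (\<lambda>S. X S * exp (- x * X S))"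
    unfolding EE_def by (simp add: sum_negf[symmetric] algebra_simps)
  ultimately show ?thesis unfolding Psi_def EE_def[abs_def] by simp
qed

lemma Psi0: "Psi 0 = 1" unfolding Psi_def by (simp add: EE_const[OF fin])

lemma Psi_bound:
  assumes l: "0 \<le> l"
  shows "Psi l \<le> exp (- (l * (mu - gam)) + l\<^sup>2 * Theta / 2)"
proof -
  define c where "c = mu - gam"
  define Phi where "Phi x = Psi x * exp (x * c - x\<^sup>2 * Theta / 2)" for x
  have "Phi l \<le> Phi 0"
  proof (rule DERIV_nonpos_imp_nonincreasing[OF l])
    fix x assume x: "0 \<le> x" "x \<le> l"
    define E where "E = exp (x * c - x\<^sup>2 * Theta / 2)"
    have "(Phi has_real_derivative
        (- EE Gamma p (\<lambda>S. X S * exp (- x * X S))) * E + Psi x * (E * (c - x * Theta))) (at x)"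
      unfolding Phi_def E_def
      by (rule derivative_eq_intros dPsi refl | simp)+
    moreover have "(- EE Gamma p (\<lambda>S. X S * exp (- x * X S))) * E + Psi x * (E * (c - x * Theta)) \<le> 0"
    proof -
      have "Psi x * (c - x * Theta) - EE Gamma p (\<lambda>S. X S * exp (- x * X S)) \<le> 0"
        using key[OF x(1)] unfolding c_def by (simp add: algebra_simps)
      hence "E * (Psi x * (c - x * Theta) - EE Gamma p (\<lambda>S. X S * exp (- x * X S))) \<le> 0"
        by (simp add: E_def mult_nonneg_nonpos)
      thus ?thesis by (simp add: algebra_simps)
    qed
    ultimately show "\<exists>y. (Phi has_real_derivative y) (at x) \<and> y \<le> 0" by blast
  qed
  hence "Psi l * exp (l * c - l\<^sup>2 * Theta / 2) \<le> 1" unfolding Phi_def by (simp add: Psi0)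
  hence "Psi l \<le> 1 / exp (l * c - l\<^sup>2 * Theta / 2)" by (simp add: field_simps)
  thus ?thesis unfolding c_def by (simp add: exp_minus[symmetric] exp_diff inverse_eq_divide)
qed


definition "Delta = (\<Sum>a\<in>Idx. \<Sum>b\<in>Idx. if dep Gamma p B a b then Pr Gamma p (B a \<inter> B b) else 0)"

lemma theta_ge: assumes a: "a \<in> Idx" shows "Pr Gamma p (B a) \<le> theta a"
proof -
  have k: "fst a \<in> Ii" using a unfolding Ii_def by simp
  have "B a \<subseteq> U a (fst a)" unfolding U_def dep_def using a by (cases a) auto
  hence "Pr Gamma p (B a) = Pr Gamma p (B a \<inter> U a (fst a))" by (simp add: Int_absorb2)
  also have "\<dots> \<le> theta a" unfolding theta_def
    by (rule member_le_sum[OF k]) (auto intro: Pr_nonneg[OF fin prb] simp: finIi)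
  finally show ?thesis .
qed

lemma Theta_ge: "mu \<le> Theta"
  unfolding mu_def Theta_def by (rule sum_mono) (rule theta_ge)

lemma theta_le: "theta a \<le> (\<Sum>b\<in>Idx. if dep Gamma p B a b then Pr Gamma p (B a \<inter> B b) else 0)"
proof -
  define f where "f b = (if dep Gamma p B b a then Pr Gamma p (B a \<inter> B b) else 0)" for b
  have "Pr Gamma p (B a \<inter> U a k) \<le> (\<Sum>l\<in>J k. f (k, l))" for k
  proof -
    define g where "g l S = (if dep Gamma p B (k, l) a then ind (B a \<inter> B (k, l)) S else 0)" for l S
    have "EE Gamma p (g l) = f (k, l)" for l
      unfolding g_def f_def by (cases "dep Gamma p B (k, l) a") (simp_all add: Pr_EE[OF fin] EE_const[OF fin])
    hence "(\<Sum>l\<in>J k. f (k, l)) = EE Gamma p (\<lambda>S. \<Sum>l\<in>J k. g l S)" by (simp add: EE_sum)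
    moreover have "EE Gamma p (ind (B a \<inter> U a k)) \<le> EE Gamma p (\<lambda>S. \<Sum>l\<in>J k. g l S)"
    proof (rule EE_mono[OF prb])
      fix S
      show "ind (B a \<inter> U a k) S \<le> (\<Sum>l\<in>J k. g l S)"
      proof (cases "S \<in> B a \<inter> U a k")
        case True
        then obtain l where l: "l \<in> J k" "dep Gamma p B (k, l) a" "S \<in> B (k, l)" "S \<in> B a"
          unfolding U_def J_def by auto
        have "g l S \<le> (\<Sum>l\<in>J k. g l S)"
          by (rule member_le_sum[OF l(1)]) (auto simp: g_def ind_def finJ)
        thus ?thesis using l True by (simp add: g_def ind_def)
      next
        case False
        hence "ind (B a \<inter> U a k) S = 0" by (simp add: ind_def)
        moreover have "0 \<le> (\<Sum>l\<in>J k. g l S)" by (rule sum_nonneg) (simp add: g_def ind_def)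
        ultimately show ?thesis by simp
      qed
    qed
    ultimately show ?thesis by (simp add: Pr_EE[OF fin])
  qed
  hence "theta a \<le> (\<Sum>k\<in>Ii. \<Sum>l\<in>J k. f (k, l))" unfolding theta_def by (rule sum_mono)
  also have "\<dots> = (\<Sum>b\<in>Idx. f b)" by (rule sigma_sum)
  finally show ?thesis unfolding f_def using dep_sym by (simp add: dep_sym[of _ _ _ a])
qed

lemma Theta_le: "Theta \<le> Delta"
  unfolding Theta_def Delta_def by (rule sum_mono) (rule theta_le)

lemma markov:
  assumes l: "0 \<le> l"
  shows "Pr Gamma p {S\<in>Pow Gamma. X S \<le> mu - t} \<le> exp (l * (mu - t)) * Psi l"
proof -
  have "EE Gamma p (ind {S\<in>Pow Gamma. X S \<le> mu - t}) \<le> EE Gamma p (\<lambda>S. exp (l * (mu - t)) * exp (- l * X S))"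
  proof (rule EE_mono[OF prb])
    fix S
    show "ind {S\<in>Pow Gamma. X S \<le> mu - t} S \<le> exp (l * (mu - t)) * exp (- l * X S)"
    proof (cases "S \<in> {S\<in>Pow Gamma. X S \<le> mu - t}")
      case True
      hence "0 \<le> l * (mu - t - X S)" using l by simp
      hence "1 \<le> exp (l * (mu - t - X S))" by simp
      thus ?thesis using True by (simp add: ind_def exp_add[symmetric] algebra_simps)
    next
      case False
      hence "ind {S\<in>Pow Gamma. X S \<le> mu - t} S = 0" unfolding ind_def by meson
      thus ?thesis by simp
    qed
  qed
  thus ?thesis unfolding Psi_def by (simp add: Pr_EE[OF fin] EE_cmult)
qed

lemma final:
  assumes mu: "0 < mu" and t: "gam \<le> t" "t \<le> mu"
  shows "Pr Gamma p {S\<in>Pow Gamma. X S \<le> mu - t} \<le> exp (- ((t - gam)\<^sup>2 / (2 * Theta)))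
    \<and> exp (- ((t - gam)\<^sup>2 / (2 * Theta))) \<le> exp (- ((t - gam)\<^sup>2 / (2 * Delta)))"
proof
  have Th: "0 < Theta" using mu Theta_ge by linarith
  define l where "l = (t - gam) / Theta"
  have l: "0 \<le> l" unfolding l_def using t Th by simp
  have "Pr Gamma p {S\<in>Pow Gamma. X S \<le> mu - t} \<le> exp (l * (mu - t)) * Psi l" by (rule markov[OF l])
  also have "\<dots> \<le> exp (l * (mu - t)) * exp (- (l * (mu - gam)) + l\<^sup>2 * Theta / 2)"
    by (rule mult_left_mono[OF Psi_bound[OF l]]) simp
  also have "\<dots> = exp (l * (mu - t) - (l * (mu - gam)) + l\<^sup>2 * Theta / 2)"
    by (simp add: exp_add[symmetric])
  also have "l * (mu - t) - (l * (mu - gam)) + l\<^sup>2 * Theta / 2 = - ((t - gam)\<^sup>2 / (2 * Theta))"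
    unfolding l_def using Th by (simp add: field_simps power2_eq_square)
  finally show "Pr Gamma p {S\<in>Pow Gamma. X S \<le> mu - t} \<le> exp (- ((t - gam)\<^sup>2 / (2 * Theta)))" .
  have "(t - gam)\<^sup>2 / (2 * Delta) \<le> (t - gam)\<^sup>2 / (2 * Theta)"
    using Th Theta_le by (intro divide_left_mono) auto
  thus "exp (- ((t - gam)\<^sup>2 / (2 * Theta))) \<le> exp (- ((t - gam)\<^sup>2 / (2 * Delta)))" by simp
qed

end

theorem mainTheorem4:
  fixes Gamma :: "'a set" and p :: "'a \<Rightarrow> real"
    and Idx :: "('i \<times> 'j) set" and B :: "'i \<times> 'j \<Rightarrow> 'a set set"
    and t :: real
  assumes "finite Gamma"
    and "\<forall>x\<in>Gamma. 0 \<le> p x \<and> p x \<le> 1"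
    and "finite Idx"
    and "\<forall>a\<in>Idx. increasing_event Gamma (B a)"
    and "(\<Sum>a\<in>Idx. Pr Gamma p (B a)) > 0"
    and "(\<Sum>i\<in>fst ` Idx. \<Sum>Q\<in>{Q. Q \<subseteq> {j. (i, j) \<in> Idx} \<and> card Q = 2}.
            Pr Gamma p (\<Inter>j\<in>Q. B (i, j))) \<le> t"
    and "t \<le> (\<Sum>a\<in>Idx. Pr Gamma p (B a))"
  shows
    "let Bi = (\<lambda>i. \<Union>j\<in>{j. (i, j) \<in> Idx}. B (i, j));
         X = (\<lambda>S. real (card {i\<in>fst ` Idx. S \<in> Bi i}));
         \<mu> = (\<Sum>a\<in>Idx. Pr Gamma p (B a));
         Theta = (\<Sum>a\<in>Idx. \<Sum>k\<in>fst ` Idx.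
                    Pr Gamma p (B a \<inter> (\<Union>l\<in>{l. (k, l) \<in> Idx \<and> dep Gamma p B (k, l) a}. B (k, l))));
         Delta = (\<Sum>a\<in>Idx. \<Sum>b\<in>Idx. if dep Gamma p B a b then Pr Gamma p (B a \<inter> B b) else 0);
         \<gamma> = (\<Sum>i\<in>fst ` Idx. \<Sum>Q\<in>{Q. Q \<subseteq> {j. (i, j) \<in> Idx} \<and> card Q = 2}.
                    Pr Gamma p (\<Inter>j\<in>Q. B (i, j)))
     in Pr Gamma p {S\<in>Pow Gamma. X S \<le> \<mu> - t} \<le> exp (- ((t - \<gamma>)\<^sup>2 / (2 * Theta)))
        \<and> exp (- ((t - \<gamma>)\<^sup>2 / (2 * Theta))) \<le> exp (- ((t - \<gamma>)\<^sup>2 / (2 * Delta)))"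
proof -
  interpret J: jset Gamma p Idx B
    using assms(1,2,3,4) by unfold_locales (auto simp: prb_def up_of_inc)
  have eqX: "{S\<in>Pow Gamma. real (card {i\<in>fst ` Idx. S \<in> (\<Union>j\<in>{j. (i, j) \<in> Idx}. B (i, j))}) \<le> J.mu - t}
      = {S\<in>Pow Gamma. J.X S \<le> J.mu - t}"
    by (simp add: J.X_card J.Bi_def J.J_def J.Ii_def)
  have F: "Pr Gamma p {S\<in>Pow Gamma. J.X S \<le> J.mu - t} \<le> exp (- ((t - J.gam)\<^sup>2 / (2 * J.Theta)))
    \<and> exp (- ((t - J.gam)\<^sup>2 / (2 * J.Theta))) \<le> exp (- ((t - J.gam)\<^sup>2 / (2 * J.Delta)))"
    by (rule J.final) (use assms(5,6,7) in \<open>simp_all add: J.mu_def J.gam_def J.Qs_def J.J_def J.Ii_def\<close>)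
  show ?thesis
    using F unfolding Let_def eqX[symmetric]
    unfolding J.mu_def J.gam_def J.Qs_def J.Theta_def J.theta_def J.U_def J.Delta_def J.J_def J.Ii_def .
qed

end
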